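(* Let $w$ be a weak convergence for a metric space $(X,d)$. If $\{x_n\}_{n\in\mathbb{N}}$ and $x$ in $X$ satisfy $x_n\to x$ in $d$, then every subsequence of $\{x_n\}_{n\in\mathbb{N}}$ admits a further subsequence converging in $w$ to $x$.
   Context: A convergence $c$ on a set $X$ is a rule assigning at most one point of $X$ as the "limit" of each sequence in $X$, such that whenever a sequence has limit $x$, every subsequence also has limit $x$; we write $x_n\to x$ in $c$. A convergence $w$ on $X$ is a weak convergence for $(X,d)$ if: (W1) whenever $\{x_n\}$ and $y$ in $X$ satisfy $\sup_n d(x_n,y)<\infty$, there are a subsequence $\{n_k\}$ and $x\in X$ with $x_{n_k}\to x$ in $w$; (W2) whenever $x_n\to x$ in $w$, $d(x,y)\le\liminf_n d(x_n,y)$ for all $y\in X$; (W3) whenever $x_n\to x$ in $w$ and $d(x_n,y)\to d(x,y)$ for some $y\in X$, then $d(x_n,x)\to0$. *)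

theory Defs
  imports "HOL-Analysis.Analysis"
begin

definition is_convergence :: "'a set \<Rightarrow> ((nat \<Rightarrow> 'a) \<Rightarrow> 'a \<Rightarrow> bool) \<Rightarrow> bool" where
  "is_convergence M c \<longleftrightarrow>
     (\<forall>xs x. c xs x \<longrightarrow> range xs \<subseteq> M \<and> x \<in> M) \<and>
     (\<forall>xs x y. c xs x \<and> c xs y \<longrightarrow> x = y) \<and>
     (\<forall>xs x r. c xs x \<and> strict_mono (r::nat\<Rightarrow>nat) \<longrightarrow> c (xs \<circ> r) x)"

definition weak_conv_for ::
  "'a set \<Rightarrow> ('a \<Rightarrow> 'a \<Rightarrow> real) \<Rightarrow> ((nat \<Rightarrow> 'a) \<Rightarrow> 'a \<Rightarrow> bool) \<Rightarrow> bool" where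
  "weak_conv_for M d w \<longleftrightarrow>
     is_convergence M w \<and>
     (\<forall>xs y. range xs \<subseteq> M \<and> y \<in> M \<and> bdd_above (range (\<lambda>n. d (xs n) y)) \<longrightarrow>
        (\<exists>r x. strict_mono (r::nat\<Rightarrow>nat) \<and> x \<in> M \<and> w (xs \<circ> r) x)) \<and>
     (\<forall>xs x y. w xs x \<and> y \<in> M \<longrightarrow>
        ereal (d x y) \<le> liminf (\<lambda>n. ereal (d (xs n) y))) \<and>
     (\<forall>xs x y. w xs x \<and> y \<in> M \<and> (\<lambda>n. d (xs n) y) \<longlonglongrightarrow> d x y \<longrightarrow>
        (\<lambda>n. d (xs n) x) \<longlonglongrightarrow> 0)"

end

theory Submission
  imports Defs
begin

theorem lemma2p2:
  fixes M :: "'a set" and d :: "'a \<Rightarrow> 'a \<Rightarrow> real"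
    and w :: "(nat \<Rightarrow> 'a) \<Rightarrow> 'a \<Rightarrow> bool" and xs :: "nat \<Rightarrow> 'a" and x :: 'a
  assumes "Metric_space M d"
    and "weak_conv_for M d w"
    and "range xs \<subseteq> M" and "x \<in> M"
    and "limitin (Metric_space.mtopology M d) xs x sequentially"
  shows "\<forall>r::nat\<Rightarrow>nat. strict_mono r \<longrightarrow> (\<exists>s::nat\<Rightarrow>nat. strict_mono s \<and> w (xs \<circ> r \<circ> s) x)"
proof (intro allI impI)
  interpret Metric_space M d by fact
  fix r :: "nat \<Rightarrow> nat" assume r: "strict_mono r"
  have t: "(\<lambda>n. d (xs n) x) \<longlonglongrightarrow> 0"
  proof (rule LIMSEQ_I)
    fix e :: real assume "0 < e"
    with assms(5) have "\<forall>\<^sub>F n in sequentially. xs n \<in> M \<and> d (xs n) x < e"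
      unfolding limitin_metric by blast
    then obtain N where "\<forall>n\<ge>N. xs n \<in> M \<and> d (xs n) x < e"
      unfolding eventually_sequentially by blast
    then show "\<exists>N. \<forall>n\<ge>N. norm (d (xs n) x - 0) < e"
      using assms(3,4) by auto
  qed
  define ys where "ys = xs \<circ> r"
  have t2: "(\<lambda>n. d (ys n) x) \<longlonglongrightarrow> 0"
    using LIMSEQ_subseq_LIMSEQ[OF t r] unfolding ys_def by (simp add: o_def)
  have ysM: "range ys \<subseteq> M" using assms(3) unfolding ys_def by auto
  have "bdd_above (range (\<lambda>n. d (ys n) x))"
    by (rule Bseq_bdd_above[OF convergent_imp_Bseq[OF convergentI[OF t2]]])
  then obtain s z where s: "strict_mono s" "z \<in> M" "w (ys \<circ> s) z"
    using assms(2) ysM assms(4) unfolding weak_conv_for_def by blast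
  have t3: "(\<lambda>n. ereal (d ((ys \<circ> s) n) x)) \<longlonglongrightarrow> ereal 0"
    using LIMSEQ_subseq_LIMSEQ[OF t2 s(1)] by (simp add: o_def)
  have "liminf (\<lambda>n. ereal (d ((ys \<circ> s) n) x)) = ereal 0"
    using lim_imp_Liminf[OF _ t3] by simp
  moreover have "ereal (d z x) \<le> liminf (\<lambda>n. ereal (d ((ys \<circ> s) n) x))"
    using assms(2) s(3) assms(4) unfolding weak_conv_for_def by blast
  ultimately have "d z x \<le> 0" by simp
  then have "z = x" using s(2) assms(4) by (meson nonneg order_antisym zero)
  then show "\<exists>s. strict_mono s \<and> w (xs \<circ> r \<circ> s) x"
    using s unfolding ys_def by blast
qed

end
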